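(* Let $\mathbb{F}$ be an algebraically closed field. If $\mathcal{A}\subseteq\mathbf{O}$ is a non-zero (not necessarily unital) subalgebra, then there exists $g\in{\rm G}_2$ such that $1_{\mathbf{O}}\in g\mathcal{A}$ or $\mathbf{u}_1\in g\mathcal{A}$ or $e_1\in g\mathcal{A}$. In particular, if $\mathrm{char}\,\mathbb{F}=2$ and $\mathcal{A}$ is a non-zero subalgebra of $\mathbf{O}$ not contained in $\mathbf{O}_0=\{a\in\mathbf{O}\mid\mathrm{tr}(a)=0\}$, then there exists $g\in{\rm G}_2$ such that $e_1\in g\mathcal{A}$.
   Context: The split octonion algebra $\mathbf{O}$ is the 8-dimensional $\mathbb{F}$-vector space of formal matrices $a=\begin{pmatrix}\alpha&\mathbf{u}\\ \mathbf{v}&\beta\end{pmatrix}$ with $\alpha,\beta\in\mathbb{F}$, $\mathbf{u},\mathbf{v}\in\mathbb{F}^3$, with multiplication $\begin{pmatrix}\alpha&\mathbf{u}\\ \mathbf{v}&\beta\end{pmatrix}\begin{pmatrix}\alpha'&\mathbf{u}'\\ \mathbf{v}'&\beta'\end{pmatrix}=\begin{pmatrix}\alpha\alpha'+\mathbf{u}\cdot\mathbf{v}'&\alpha\mathbf{u}'+\beta'\mathbf{u}-\mathbf{v}\times\mathbf{v}'\\ \alpha'\mathbf{v}+\beta\mathbf{v}'+\mathbf{u}\times\mathbf{u}'&\beta\beta'+\mathbf{v}\cdot\mathbf{u}'\end{pmatrix}$ (dot product and cross product on $\mathbb{F}^3$). Trace $\mathrm{tr}(a)=\alpha+\beta$.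 With $\mathbf{c}_1,\mathbf{c}_2,\mathbf{c}_3$ the standard basis of $\mathbb{F}^3$: $e_1$ has $\alpha=1$ and all else $0$, $e_2$ has $\beta=1$ and all else $0$, $\mathbf{u}_1$ has $\mathbf{u}=\mathbf{c}_1$ and all else $0$; $1_{\mathbf{O}}=e_1+e_2$. ${\rm G}_2=\mathrm{Aut}(\mathbf{O})$. *)

theory Defs
  imports "HOL-Computational_Algebra.Polynomial"
begin

datatype 'a vec3 = V3 'a 'a 'a

fun vadd :: "'a::field vec3 \<Rightarrow> 'a vec3 \<Rightarrow> 'a vec3" where
  "vadd (V3 a b c) (V3 x y z) = V3 (a + x) (b + y) (c + z)"

fun vscale :: "'a::field \<Rightarrow> 'a vec3 \<Rightarrow> 'a vec3" where
  "vscale t (V3 a b c) = V3 (t * a) (t * b) (t * c)"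

fun vneg :: "'a::field vec3 \<Rightarrow> 'a vec3" where
  "vneg (V3 a b c) = V3 (- a) (- b) (- c)"

fun vdot :: "'a::field vec3 \<Rightarrow> 'a vec3 \<Rightarrow> 'a" where
  "vdot (V3 a b c) (V3 x y z) = a * x + b * y + c * z"

fun vcross :: "'a::field vec3 \<Rightarrow> 'a vec3 \<Rightarrow> 'a vec3" where
  "vcross (V3 a b c) (V3 x y z) = V3 (b * z - c * y) (c * x - a * z) (a * y - b * x)"

definition vzero :: "'a::field vec3" where "vzero = V3 0 0 0"

text \<open>Split octonions: formal matrices (alpha, u; v, beta).\<close>
datatype 'a oct = Oct 'a "'a vec3" "'a vec3" 'a

fun oadd :: "'a::field oct \<Rightarrow> 'a oct \<Rightarrow> 'a oct" where
  "oadd (Oct a u v b) (Oct a' u' v' b') = Oct (a + a') (vadd u u') (vadd v v') (b + b')"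

fun oscale :: "'a::field \<Rightarrow> 'a oct \<Rightarrow> 'a oct" where
  "oscale t (Oct a u v b) = Oct (t * a) (vscale t u) (vscale t v) (t * b)"

fun omult :: "'a::field oct \<Rightarrow> 'a oct \<Rightarrow> 'a oct" where
  "omult (Oct a u v b) (Oct a' u' v' b') =
     Oct (a * a' + vdot u v')
         (vadd (vadd (vscale a u') (vscale b' u)) (vneg (vcross v v')))
         (vadd (vadd (vscale a' v) (vscale b v')) (vcross u u'))
         (b * b' + vdot v u')"

fun otr :: "'a::field oct \<Rightarrow> 'a" where
  "otr (Oct a u v b) = a + b"

definition ozero :: "'a::field oct" where "ozero = Oct 0 vzero vzero 0"
definition oe1 :: "'a::field oct" where "oe1 = Oct 1 vzero vzero 0"
definition oe2 :: "'a::field oct" where "oe2 = Oct 0 vzero vzero 1"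
definition oone :: "'a::field oct" where "oone = oadd oe1 oe2"
definition ou1 :: "'a::field oct" where "ou1 = Oct 0 (V3 1 0 0) vzero 0"

definition is_subalgebra :: "'a::field oct set \<Rightarrow> bool" where
  "is_subalgebra A \<longleftrightarrow> ozero \<in> A \<and>
     (\<forall>x\<in>A. \<forall>y\<in>A. oadd x y \<in> A) \<and>
     (\<forall>t. \<forall>x\<in>A. oscale t x \<in> A) \<and>
     (\<forall>x\<in>A. \<forall>y\<in>A. omult x y \<in> A)"

definition G2 :: "('a::field oct \<Rightarrow> 'a oct) set" where
  "G2 = {g. bij g \<and> (\<forall>x y. g (oadd x y) = oadd (g x) (g y)) \<and>
             (\<forall>t x. g (oscale t x) = oscale t (g x)) \<and>
             (\<forall>x y. g (omult x y) = omult (g x) (g y))}"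

definition O0 :: "'a::field oct set" where "O0 = {a. otr a = 0}"

end

theory Submission
  imports Defs
begin

fun phi :: "'a::field vec3 \<Rightarrow> 'a oct \<Rightarrow> 'a oct" where
  "phi p (Oct a u v b) = Oct (a + vdot p v) (vadd u (vscale (b - a - vdot p v) p)) (vadd v (vcross u p)) (b - vdot p v)"

fun psi :: "'a::field vec3 \<Rightarrow> 'a oct \<Rightarrow> 'a oct" where
  "psi q (Oct a u v b) = Oct (a + vdot q u) (vadd u (vcross v q)) (vadd v (vscale (b - a - vdot q u) q)) (b - vdot q u)"

fun lam :: "'a::field \<Rightarrow> 'a \<Rightarrow> 'a oct \<Rightarrow> 'a oct" where
  "lam s t (Oct a (V3 u1 u2 u3) (V3 v1 v2 v3) b) =
     Oct a (V3 u1 (u2 + s*u1) (u3 + t*u1)) (V3 (v1 - s*v2 - t*v3) v2 v3) b"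

fun sig :: "'a::field oct \<Rightarrow> 'a oct" where
  "sig (Oct a (V3 u1 u2 u3) (V3 v1 v2 v3) b) = Oct a (V3 u3 u1 u2) (V3 v3 v1 v2) b"

fun onorm :: "'a::field oct \<Rightarrow> 'a" where
  "onorm (Oct a u v b) = a * b - vdot u v"

lemma oct_exh: obtains a u1 u2 u3 v1 v2 v3 b where "x = Oct a (V3 u1 u2 u3) (V3 v1 v2 v3) b"
  by (metis oct.exhaust vec3.exhaust)

lemma vec_exh: obtains p1 p2 p3 where "p = V3 p1 p2 p3"
  by (metis vec3.exhaust)

lemma G2I:
  assumes "bij g" "\<And>x y. g (oadd x y) = oadd (g x) (g y)" "\<And>t x. g (oscale t x) = oscale t (g x)"
    "\<And>x y. g (omult x y) = omult (g x) (g y)"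
  shows "g \<in> G2"
  using assms unfolding G2_def by blast

lemma G2_comp: "g \<in> G2 \<Longrightarrow> h \<in> G2 \<Longrightarrow> g \<circ> h \<in> G2"
  unfolding G2_def by (auto intro: bij_comp)

lemma G2_id: "id \<in> G2"
  unfolding G2_def by auto

lemma phi_G2: "phi p \<in> G2"
proof (rule G2I)
  show "bij (phi p)"
  proof (rule o_bij)
    have "phi (vneg p) (phi p x) = x" "phi p (phi (vneg p) x) = x" for x
      by (rule oct_exh[of x], rule vec_exh[of p], simp add: algebra_simps)+
    then show "phi (vneg p) \<circ> phi p = id" "phi p \<circ> phi (vneg p) = id" by auto
  qed
  show "phi p (oadd x y) = oadd (phi p x) (phi p y)" for x y
    by (rule oct_exh[of x], rule oct_exh[of y], rule vec_exh[of p]) (simp add: algebra_simps)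
  show "phi p (oscale t x) = oscale t (phi p x)" for t x
    by (rule oct_exh[of x], rule vec_exh[of p]) (simp add: algebra_simps)
  show "phi p (omult x y) = omult (phi p x) (phi p y)" for x y
    by (rule oct_exh[of x], rule oct_exh[of y], rule vec_exh[of p]) (simp add: algebra_simps)
qed

lemma psi_G2: "psi p \<in> G2"
proof (rule G2I)
  show "bij (psi p)"
  proof (rule o_bij)
    have "psi (vneg p) (psi p x) = x" "psi p (psi (vneg p) x) = x" for x
      by (rule oct_exh[of x], rule vec_exh[of p], simp add: algebra_simps)+
    then show "psi (vneg p) \<circ> psi p = id" "psi p \<circ> psi (vneg p) = id" by auto
  qed
  show "psi p (oadd x y) = oadd (psi p x) (psi p y)" for x y
    by (rule oct_exh[of x], rule oct_exh[of y], rule vec_exh[of p]) (simp add: algebra_simps)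
  show "psi p (oscale t x) = oscale t (psi p x)" for t x
    by (rule oct_exh[of x], rule vec_exh[of p]) (simp add: algebra_simps)
  show "psi p (omult x y) = omult (psi p x) (psi p y)" for x y
    by (rule oct_exh[of x], rule oct_exh[of y], rule vec_exh[of p]) (simp add: algebra_simps)
qed

lemma lam_G2: "lam s t \<in> G2"
proof (rule G2I)
  show "bij (lam s t)"
  proof (rule o_bij)
    have "lam (-s) (-t) (lam s t x) = x" "lam s t (lam (-s) (-t) x) = x" for x
      by (rule oct_exh[of x], simp add: algebra_simps)+
    then show "lam (-s) (-t) \<circ> lam s t = id" "lam s t \<circ> lam (-s) (-t) = id" by auto
  qed
  show "lam s t (oadd x y) = oadd (lam s t x) (lam s t y)" for x y
    by (rule oct_exh[of x], rule oct_exh[of y]) (simp add: algebra_simps)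
  show "lam s t (oscale c x) = oscale c (lam s t x)" for c x
    by (rule oct_exh[of x]) (simp add: algebra_simps)
  show "lam s t (omult x y) = omult (lam s t x) (lam s t y)" for x y
    by (rule oct_exh[of x], rule oct_exh[of y]) (simp add: algebra_simps)
qed

lemma sig3: "sig (sig (sig x)) = x"
  by (rule oct_exh[of x], simp)

lemma sig_G2: "(sig :: 'a::field oct \<Rightarrow> _) \<in> G2"
proof (rule G2I)
  show "bij sig"
  proof (rule o_bij)
    show "sig \<circ> (sig \<circ> sig) = id" "(sig \<circ> sig) \<circ> sig = id" by (auto simp: fun_eq_iff sig3)
  qed
  show "sig (oadd x y) = oadd (sig x) (sig y)" for x y
    by (rule oct_exh[of x], rule oct_exh[of y]) (simp add: algebra_simps)
  show "sig (oscale c x) = oscale c (sig x)" for c x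
    by (rule oct_exh[of x]) (simp add: algebra_simps)
  show "sig (omult x y) = omult (sig x) (sig y)" for x y
    by (rule oct_exh[of x], rule oct_exh[of y]) (simp add: algebra_simps)
qed

lemma otr_phi: "otr (phi p x) = otr x" and onorm_phi: "onorm (phi p x) = onorm x"
  by (rule oct_exh[of x], rule vec_exh[of p], simp add: algebra_simps)+

lemma otr_psi: "otr (psi p x) = otr x" and onorm_psi: "onorm (psi p x) = onorm x"
  by (rule oct_exh[of x], rule vec_exh[of p], simp add: algebra_simps)+

definition orb :: "'a::field oct \<Rightarrow> 'a oct \<Rightarrow> bool" where
  "orb x y \<longleftrightarrow> (\<exists>g\<in>G2. g x = y)"

lemma orb_refl: "orb x x"
  unfolding orb_def by (intro bexI[of _ id]) (auto simp: G2_id)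

lemma orb_G2: "g \<in> G2 \<Longrightarrow> y = g x \<Longrightarrow> orb x y"
  unfolding orb_def by blast

lemma orb_trans: "orb x y \<Longrightarrow> orb y z \<Longrightarrow> orb x z"
  unfolding orb_def by (metis G2_comp comp_apply)

lemma G2_scale: "g \<in> G2 \<Longrightarrow> g (oscale t x) = oscale t (g x)"
  unfolding G2_def by blast

lemma G2_inj: "g \<in> G2 \<Longrightarrow> inj g"
  unfolding G2_def bij_def by blast

lemma oscale_zero: "oscale 0 x = ozero"
  by (rule oct_exh[of x]) (simp add: ozero_def vzero_def)

lemma G2_zero: "g \<in> G2 \<Longrightarrow> g ozero = ozero"
  by (metis G2_scale oscale_zero)

lemma exists_dot:
  assumes "w \<noteq> vzero" shows "\<exists>p. vdot p w = c"
proof -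
  obtain w1 w2 w3 where w: "w = V3 w1 w2 w3" by (rule vec_exh)
  show ?thesis
  proof (cases "w1 = 0")
    case False
    then show ?thesis by (intro exI[of _ "V3 (c/w1) 0 0"]) (simp add: w)
  next
    case w1: True
    show ?thesis
    proof (cases "w2 = 0")
      case False
      then show ?thesis by (intro exI[of _ "V3 0 (c/w2) 0"]) (simp add: w)
    next
      case True
      with w1 assms w have "w3 \<noteq> 0" by (auto simp: vzero_def)
      then show ?thesis by (intro exI[of _ "V3 0 0 (c/w3)"]) (simp add: w)
    qed
  qed
qed

lemma idem1:
  assumes "vdot u v = 0" shows "orb (Oct 1 u v 0) oe1"
proof -
  have "phi u (Oct 1 u v 0) = Oct 1 (vadd u (vscale (-1) u)) (vadd v (vcross u u)) 0"
    using assms by simp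
  also have "\<dots> = Oct 1 vzero v 0"
    by (rule vec_exh[of u], rule vec_exh[of v]) (simp add: vzero_def)
  finally have 1: "orb (Oct 1 u v 0) (Oct 1 vzero v 0)" by (rule orb_G2[OF phi_G2, OF sym])
  have "psi v (Oct 1 vzero v 0) = oe1"
    by (rule vec_exh[of v]) (simp add: vzero_def oe1_def)
  then have 2: "orb (Oct 1 vzero v 0) oe1" by (rule orb_G2[OF psi_G2, OF sym])
  show ?thesis by (rule orb_trans[OF 1 2])
qed

lemma idem2:
  assumes "otr x = 1" "onorm x = 0" "x = Oct 1 u v b" shows "orb x oe1"
proof -
  have "b = 0" using assms by simp
  moreover have "vdot u v = 0" using assms by simp
  ultimately show ?thesis using idem1 assms(3) by simp
qed

lemma idem_v:
  assumes "otr x = 1" "onorm x = 0" "x = Oct a u v b" "v \<noteq> vzero" shows "orb x oe1"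
proof -
  obtain p where p: "vdot p v = 1 - a" using exists_dot[OF assms(4)] by blast
  have y: "phi p x = Oct 1 (vadd u (vscale (b - a - vdot p v) p)) (vadd v (vcross u p)) (b - vdot p v)"
    using assms(3) p by simp
  have "orb (phi p x) oe1"
    by (rule idem2[OF _ _ y]) (simp_all only: otr_phi onorm_phi assms(1,2))
  then show ?thesis using orb_trans orb_G2[OF phi_G2] by blast
qed

lemma idem_u:
  assumes "otr x = 1" "onorm x = 0" "x = Oct a u v b" "u \<noteq> vzero" shows "orb x oe1"
proof -
  obtain p where p: "vdot p u = 1 - a" using exists_dot[OF assms(4)] by blast
  have y: "psi p x = Oct 1 (vadd u (vcross v p)) (vadd v (vscale (b - a - vdot p u) p)) (b - vdot p u)"
    using assms(3) p by simp
  have "orb (psi p x) oe1"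
    by (rule idem2[OF _ _ y]) (simp_all only: otr_psi onorm_psi assms(1,2))
  then show ?thesis using orb_trans orb_G2[OF psi_G2] by blast
qed

lemma idem:
  assumes "otr x = 1" "onorm x = 0" shows "orb x oe1"
proof -
  obtain a u v b where x: "x = Oct a u v b" by (rule oct.exhaust)
  show ?thesis
  proof (cases "v = vzero")
    case False then show ?thesis using idem_v[OF assms x] by blast
  next
    case v: True
    show ?thesis
    proof (cases "u = vzero")
      case False then show ?thesis using idem_u[OF assms x] by blast
    next
      case u: True
      have ab: "a + b = 1" "a * b = 0" using assms x u v by (simp_all add: vzero_def)
      show ?thesis
      proof (cases "a = 0")
        case False
        then have "b = 0" "a = 1" using ab by auto
        then show ?thesis using x u v by (simp add: oe1_def orb_refl)
      next
        case True
        then have b: "b = 1" using ab by auto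
        have y: "phi (V3 1 0 0) x = Oct 0 (V3 1 0 0) vzero 1"
          using x u v b True by (simp add: vzero_def)
        have "orb (phi (V3 1 0 0) x) oe1"
          by (rule idem_u[OF _ _ y]) (simp_all only: otr_phi onorm_phi assms, simp add: vzero_def)
        then show ?thesis using orb_trans orb_G2[OF phi_G2] by blast
      qed
    qed
  qed
qed

definition nilo :: "'a::field oct \<Rightarrow> bool" where
  "nilo x \<longleftrightarrow> (\<exists>g\<in>G2. \<exists>c. c \<noteq> 0 \<and> g x = oscale c ou1)"

lemma nilo_orb: "orb x y \<Longrightarrow> nilo y \<Longrightarrow> nilo x"
  unfolding orb_def nilo_def by (metis G2_comp comp_apply)

lemma N1a:
  assumes "u1 \<noteq> 0" shows "nilo (Oct 0 (V3 u1 u2 u3) vzero 0)"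
proof -
  have "lam (-u2/u1) (-u3/u1) (Oct 0 (V3 u1 u2 u3) vzero 0) = oscale u1 ou1"
    using assms by (simp add: vzero_def ou1_def)
  then show ?thesis unfolding nilo_def using assms lam_G2 by blast
qed

lemma N1:
  assumes "u \<noteq> vzero" shows "nilo (Oct 0 u vzero 0)"
proof -
  obtain u1 u2 u3 where u: "u = V3 u1 u2 u3" by (rule vec_exh)
  show ?thesis
  proof (cases "u1 = 0")
    case False then show ?thesis using N1a u by blast
  next
    case u1: True
    show ?thesis
    proof (cases "u3 = 0")
      case False
      have "sig (Oct 0 u vzero 0) = Oct 0 (V3 u3 u1 u2) vzero 0" by (simp add: u vzero_def)
      then show ?thesis using N1a[OF False] nilo_orb orb_G2[OF sig_G2] by metis
    next
      case True
      with u1 u assms have "u2 \<noteq> 0" by (auto simp: vzero_def)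
      have "(sig \<circ> sig) (Oct 0 u vzero 0) = Oct 0 (V3 u2 u3 u1) vzero 0" by (simp add: u vzero_def)
      then show ?thesis using N1a[OF \<open>u2 \<noteq> 0\<close>] nilo_orb orb_G2[OF G2_comp[OF sig_G2 sig_G2]] by metis
    qed
  qed
qed

lemma vdot_scale: "vdot (vscale c v) u = c * vdot u v"
  by (rule vec_exh[of u], rule vec_exh[of v]) (simp add: algebra_simps)

lemma N2:
  assumes "otr x = 0" "onorm x = 0" "x = Oct a u v b" "a \<noteq> 0" shows "nilo x"
proof -
  define q where "q = vscale (1/a) v"
  have "a + b = 0" using assms by simp
  then have b: "b = - a" by (simp add: add_eq_0_iff)
  have uv: "vdot u v = a * b" using assms by simp
  have hq: "vdot q u = - a" unfolding q_def vdot_scale uv b using assms(4) by simp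
  have "psi q x = Oct 0 (vadd u (vcross v q)) (vadd v (vscale (-a) q)) 0"
    using assms(3) hq b by simp
  also have "vadd v (vscale (-a) q) = vzero"
    unfolding q_def using assms(4) by (cases v) (simp add: vzero_def)
  finally have y: "psi q x = Oct 0 (vadd u (vcross v q)) vzero 0" .
  have "vadd u (vcross v q) \<noteq> vzero"
  proof
    assume "vadd u (vcross v q) = vzero"
    then have "psi q x = ozero" using y by (simp add: ozero_def)
    moreover have "psi q ozero = ozero" by (rule G2_zero[OF psi_G2])
    ultimately have "x = ozero" using G2_inj[OF psi_G2, of q] by (metis injD)
    then show False using assms(3,4) by (simp add: ozero_def)
  qed
  then have "nilo (psi q x)" using y N1 by simp
  then show ?thesis using nilo_orb orb_G2[OF psi_G2] by blast
qed

lemma N3: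
  assumes "otr x = 0" "onorm x = 0" "x \<noteq> ozero" shows "nilo x"
proof -
  obtain a u v b where x: "x = Oct a u v b" by (rule oct.exhaust)
  show ?thesis
  proof (cases "a = 0")
    case False then show ?thesis using N2[OF assms(1,2) x] by blast
  next
    case a: True
    then have b: "b = 0" using assms x by simp
    show ?thesis
    proof (cases "v = vzero")
      case True
      then have "u \<noteq> vzero" using assms(3) x a b by (auto simp: ozero_def)
      then show ?thesis using N1 x a b True by simp
    next
      case False
      obtain p where p: "vdot p v = 1" using exists_dot[OF False] by blast
      have y: "phi p x = Oct 1 (vadd u (vscale (b - a - vdot p v) p)) (vadd v (vcross u p)) (b - vdot p v)"
        using x p a by simp
      have "nilo (phi p x)"
        by (rule N2[OF _ _ y]) (simp_all only: otr_phi onorm_phi assms, simp)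
      then show ?thesis using nilo_orb orb_G2[OF phi_G2] by blast
    qed
  qed
qed

lemma one_id:
  assumes "onorm x \<noteq> 0"
  shows "oscale (1 / onorm x) (oadd (oscale (otr x) x) (oscale (-1) (omult x x))) = oone"
proof -
  obtain a u1 u2 u3 v1 v2 v3 b where x: "x = Oct a (V3 u1 u2 u3) (V3 v1 v2 v3) b" by (rule oct_exh)
  have n: "a * b - (u1 * v1 + u2 * v2 + u3 * v3) \<noteq> 0" using assms x by simp
  show ?thesis using n unfolding x
    by (simp add: oone_def oe1_def oe2_def vzero_def field_simps)
qed

lemma otr_scale: "otr (oscale c x) = c * otr x"
  by (rule oct_exh[of x]) (simp add: algebra_simps)

lemma onorm_scale: "onorm (oscale c x) = c^2 * onorm x"
  by (rule oct_exh[of x]) (simp add: algebra_simps power2_eq_square)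

lemma otr_shift: "otr (oadd x (oscale s oone)) = otr x + 2 * s"
  by (rule oct_exh[of x]) (simp add: algebra_simps oone_def oe1_def oe2_def vzero_def)

lemma onorm_shift: "onorm (oadd x (oscale s oone)) = onorm x + s * otr x + s^2"
  by (rule oct_exh[of x]) (simp add: algebra_simps oone_def oe1_def oe2_def vzero_def power2_eq_square)

lemma sub_scale: "is_subalgebra A \<Longrightarrow> x \<in> A \<Longrightarrow> oscale t x \<in> A"
  unfolding is_subalgebra_def by blast

lemma sub_add: "is_subalgebra A \<Longrightarrow> x \<in> A \<Longrightarrow> y \<in> A \<Longrightarrow> oadd x y \<in> A"
  unfolding is_subalgebra_def by blast

lemma sub_mult: "is_subalgebra A \<Longrightarrow> x \<in> A \<Longrightarrow> y \<in> A \<Longrightarrow> omult x y \<in> A"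
  unfolding is_subalgebra_def by blast

lemma one_in:
  assumes "is_subalgebra A" "x \<in> A" "onorm x \<noteq> 0" shows "oone \<in> A"
proof -
  have "oscale (1 / onorm x) (oadd (oscale (otr x) x) (oscale (-1) (omult x x))) \<in> A"
    using assms by (intro sub_scale sub_add sub_mult) auto
  then show ?thesis using one_id[OF assms(3)] by simp
qed

lemma idem_in:
  assumes "is_subalgebra A" "x \<in> A" "otr x \<noteq> 0" "onorm x = 0"
  shows "\<exists>g\<in>G2. oe1 \<in> g ` A"
proof -
  define e where "e = oscale (1 / otr x) x"
  have eA: "e \<in> A" unfolding e_def using assms by (intro sub_scale)
  have "otr e = 1" "onorm e = 0" unfolding e_def using assms by (simp_all add: otr_scale onorm_scale)
  then obtain g where "g \<in> G2" "g e = oe1" using idem unfolding orb_def by blast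
  then show ?thesis using eA by (metis image_eqI)
qed

lemma nil_in:
  assumes "is_subalgebra A" "x \<in> A" "otr x = 0" "onorm x = 0" "x \<noteq> ozero"
  shows "\<exists>g\<in>G2. ou1 \<in> g ` A"
proof -
  obtain g c where g: "g \<in> G2" "c \<noteq> 0" "g x = oscale c ou1" using N3[OF assms(3-5)] unfolding nilo_def by blast
  have "g (oscale (1/c) x) = oscale (1/c) (oscale c ou1)" using G2_scale[OF g(1)] g(3) by simp
  also have "\<dots> = ou1" using g(2) by (simp add: ou1_def vzero_def)
  finally show ?thesis using sub_scale[OF assms(1,2)] g(1) by (metis image_eqI)
qed

theorem lemma6p6:
  shows "(\<forall>A :: 'a::alg_closed_field oct set.
            is_subalgebra A \<and> A \<noteq> {ozero} \<longrightarrow>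
            (\<exists>g\<in>G2. oone \<in> g ` A \<or> ou1 \<in> g ` A \<or> oe1 \<in> g ` A)) \<and>
         (CHAR('a) = 2 \<longrightarrow>
           (\<forall>A :: 'a oct set.
              is_subalgebra A \<and> A \<noteq> {ozero} \<and> \<not> A \<subseteq> O0 \<longrightarrow>
              (\<exists>g\<in>G2. oe1 \<in> g ` A)))"
proof (intro conjI allI impI)
  fix A :: "'a oct set"
  assume H: "is_subalgebra A \<and> A \<noteq> {ozero}"
  then have sub: "is_subalgebra A" by blast
  have "ozero \<in> A" using sub unfolding is_subalgebra_def by blast
  then obtain x where x: "x \<in> A" "x \<noteq> ozero" using H by blast
  show "\<exists>g\<in>G2. oone \<in> g ` A \<or> ou1 \<in> g ` A \<or> oe1 \<in> g ` A"
  proof (cases "onorm x = 0")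
    case False
    then have "oone \<in> A" using one_in sub x by blast
    then have "oone \<in> id ` A" by simp
    then show ?thesis using G2_id by blast
  next
    case n: True
    show ?thesis
    proof (cases "otr x = 0")
      case True then show ?thesis using nil_in[OF sub x(1) True n x(2)] by blast
    next
      case False then show ?thesis using idem_in[OF sub x(1) False n] by blast
    qed
  qed
next
  fix A :: "'a oct set"
  assume C: "CHAR('a) = 2"
  assume H: "is_subalgebra A \<and> A \<noteq> {ozero} \<and> \<not> A \<subseteq> O0"
  then have sub: "is_subalgebra A" by blast
  have two: "(2::'a) = 0" using of_nat_CHAR[where 'a='a] C by simp
  obtain x where x: "x \<in> A" "otr x \<noteq> 0" using H unfolding O0_def by blast
  show "\<exists>g\<in>G2. oe1 \<in> g ` A"
  proof (cases "onorm x = 0")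
    case True then show ?thesis using idem_in[OF sub x True] by blast
  next
    case False
    have one: "oone \<in> A" using one_in sub x(1) False by blast
    define f where "f = (\<lambda>k::nat. if k = 0 then onorm x else if k = 1 then otr x else (1::'a))"
    obtain s where "(\<Sum>k\<le>2. f k * s ^ k) = 0" using alg_closed[of 2 f] by (auto simp: f_def)
    then have s: "onorm x + s * otr x + s^2 = 0"
      by (simp add: f_def numeral_2_eq_2 atMost_Suc algebra_simps)
    define y where "y = oadd x (oscale s oone)"
    have yA: "y \<in> A" unfolding y_def using sub x(1) one by (intro sub_add sub_scale)
    have "otr y = otr x" unfolding y_def otr_shift using two by simp
    moreover have "onorm y = 0" unfolding y_def onorm_shift using s by simp
    ultimately show ?thesis using idem_in[OF sub yA] x(2) by simp
  qed
qed

end
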